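(* Let $X$ be a complete metric space, let $f:X\to\mathbb{R}\cup\{+\infty\}$ be a proper lower semicontinuous function, let $r_0>0$ and let $k>0$. The following assertions are equivalent: (i) The multivalued mapping $F:X\rightrightarrows\mathbb{R}$, $F(x)=[f(x),+\infty)$, is $k$-metrically regular on $[0<f<r_0]\times(0,r_0)$; (ii) For all $r\in(0,r_0)$ and all $x\in[0<f<r_0]$, $$\operatorname{dist}(x,[f\le r])\le k\,(f(x)-r)^+;$$ (iii) For all $x\in[0<f<r_0]$, $|\nabla f|(x)\ge \frac1k$.
   Context: Notation: $[r_1<f<r_2]=\{x\in X: r_1<f(x)<r_2\}$, $[f\le r]=\{x\in X:f(x)\le r\}$; $a^+=\max\{a,0\}$; $\operatorname{dist}(x,S)=\inf_{y\in S}d(x,y)$ (equal to $+\infty$ if $S=\emptyset$). For a multivalued map $F:X\rightrightarrows Y$ between metric spaces, $\operatorname{Graph}F=\{(x,y):y\in F(x)\}$ and $F^{-1}(y)=\{x:y\in F(x)\}$. $F$ is $k$-metrically regular at $(\bar x,\bar y)\in\operatorname{Graph}F$ if there exist $\varepsilon,\delta>0$ such that $\operatorname{dist}(x,F^{-1}(y))\le k\operatorname{dist}(y,F(x))$ for all $(x,y)\in B(\bar x,\varepsilon)\times B(\bar y,\delta)$; $F$ is $k$-metrically regular on a set $V\subset X\times Y$ if it is $k$-metrically regular at every point of $\operatorname{Graph}F\cap V$. The strong slope of $f$ at $x\in\operatorname{dom}f$ is $|\nabla f|(x)=\limsup_{y\to x}\frac{(f(x)-f(y))^+}{d(x,y)}$.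 $B(x,r)$ is the open ball. *)

theory Defs
  imports "HOL-Analysis.Analysis"
begin

definition set_dist :: "'a::metric_space \<Rightarrow> 'a set \<Rightarrow> ereal" where
  "set_dist x S = (if S = {} then \<infinity> else ereal (INF y\<in>S. dist x y))"

definition graph_mv :: "('a \<Rightarrow> 'b set) \<Rightarrow> ('a \<times> 'b) set" where
  "graph_mv F = {(x, y). y \<in> F x}"

definition inv_mv :: "('a \<Rightarrow> 'b set) \<Rightarrow> 'b \<Rightarrow> 'a set" where
  "inv_mv F y = {x. y \<in> F x}"

definition metrically_regular_at ::
  "real \<Rightarrow> ('a::metric_space \<Rightarrow> 'b::metric_space set) \<Rightarrow> 'a \<Rightarrow> 'b \<Rightarrow> bool" where
  "metrically_regular_at k F xb yb \<longleftrightarrow>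
     (\<exists>\<epsilon>>0. \<exists>\<delta>>0. \<forall>x\<in>ball xb \<epsilon>. \<forall>y\<in>ball yb \<delta>.
        set_dist x (inv_mv F y) \<le> ereal k * set_dist y (F x))"

definition metrically_regular_on ::
  "real \<Rightarrow> ('a::metric_space \<Rightarrow> 'b::metric_space set) \<Rightarrow> ('a \<times> 'b) set \<Rightarrow> bool" where
  "metrically_regular_on k F V \<longleftrightarrow>
     (\<forall>(xb, yb) \<in> graph_mv F \<inter> V. metrically_regular_at k F xb yb)"

definition proper_fun :: "('a \<Rightarrow> ereal) \<Rightarrow> bool" where
  "proper_fun f \<longleftrightarrow> (\<forall>x. f x \<noteq> -\<infinity>) \<and> (\<exists>x. f x \<noteq> \<infinity>)"

definition lsc_fun :: "('a::topological_space \<Rightarrow> ereal) \<Rightarrow> bool" where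
  "lsc_fun f \<longleftrightarrow> (\<forall>x. f x \<le> Liminf (at x) f)"

definition strong_slope :: "('a::metric_space \<Rightarrow> ereal) \<Rightarrow> 'a \<Rightarrow> ereal" where
  "strong_slope f x = Limsup (at x) (\<lambda>y. max 0 (f x - f y) / ereal (dist x y))"

end

theory Submission
  imports Defs
begin


lemma ekeland:
  fixes h :: "'a::complete_space \<Rightarrow> real"
  assumes lsc: "\<And>z y. y < h z \<Longrightarrow> \<exists>e>0. \<forall>w. dist w z < e \<longrightarrow> y < h w"
    and bnd: "\<And>w. m \<le> h w" and c: "c > 0"
  shows "\<exists>z. h z + c * dist z x0 \<le> h x0 \<and> (\<forall>w. h z \<le> h w + c * dist w z)"
proof -
  define S where "S y = {w. h w + c * dist w y \<le> h y}" for y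
  have selfS: "y \<in> S y" for y by (simp add: S_def)
  have trans: "w \<in> S b" if "w \<in> S a" "a \<in> S b" for w a b
  proof -
    have "c * dist w b \<le> c * dist w a + c * dist a b"
      using mult_left_mono[OF dist_triangle[of w b a], of c] c by (simp add: distrib_left)
    thus ?thesis using that unfolding S_def by auto
  qed
  have bddS: "bdd_below (h ` S y)" for y using bnd by (auto intro!: bdd_belowI)
  have ex: "\<exists>w. w \<in> S y \<and> h w < Inf (h ` S y) + e" if "e>0" for y e
  proof -
    have "Inf (h ` S y) < Inf (h ` S y) + e" using that by simp
    have "h ` S y \<noteq> {}" using selfS by blast
    from cInf_lessD[OF this] \<open>Inf (h ` S y) < _\<close> show ?thesis by blast
  qed
  define nxt where "nxt y n = (SOME w. w \<in> S y \<and> h w < Inf (h ` S y) + inverse (real (Suc n)))" for y n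
  have nxt: "nxt y n \<in> S y \<and> h (nxt y n) < Inf (h ` S y) + inverse (real (Suc n))" for y n
    unfolding nxt_def by (rule someI_ex) (rule ex, simp)
  define x where "x = rec_nat x0 (\<lambda>n y. nxt y n)"
  have x0: "x 0 = x0" and xS: "x (Suc n) = nxt (x n) n" for n by (simp_all add: x_def)
  have step: "x (Suc n) \<in> S (x n)" for n using nxt xS by simp
  have mono: "x m \<in> S (x n)" if "n \<le> m" for n m
    using that
  proof (induction m rule: dec_induct)
    case base thus ?case by (rule selfS)
  next
    case (step m) thus ?case using trans \<open>\<And>n. x (Suc n) \<in> S (x n)\<close> by blast
  qed
  have small: "c * dist w (x (Suc n)) \<le> inverse (real (Suc n))" if "w \<in> S (x (Suc n))" for w n
  proof -
    have "w \<in> S (x n)" using trans that step by blast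
    hence "Inf (h ` S (x n)) \<le> h w" using bddS by (auto intro: cInf_lower)
    moreover have "h (x (Suc n)) < Inf (h ` S (x n)) + inverse (real (Suc n))" using nxt xS by simp
    moreover have "h w + c * dist w (x (Suc n)) \<le> h (x (Suc n))" using that by (simp add: S_def)
    ultimately show ?thesis by linarith
  qed
  have dsmall: "dist (x m) (x (Suc n)) \<le> inverse c * inverse (real (Suc n))" if "Suc n \<le> m" for m n
  proof -
    have "c * dist (x m) (x (Suc n)) \<le> inverse (real (Suc n))" using small mono[OF that] by blast
    hence "inverse c * (c * dist (x m) (x (Suc n))) \<le> inverse c * inverse (real (Suc n))"
      using c by (intro mult_left_mono) auto
    moreover have "inverse c * (c * dist (x m) (x (Suc n))) = dist (x m) (x (Suc n))" using c by simp
    ultimately show ?thesis by linarith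
  qed
  have "Cauchy x"
  proof (rule metric_CauchyI)
    fix e :: real assume e: "e > 0"
    obtain N where N: "N > 0" "inverse (real N) < c * e / 2" using ex_inverse_of_nat_less[of "c*e/2"] c e by auto
    have "inverse (real (Suc N)) \<le> inverse (real N)" using N by (simp add: field_simps)
    hence "inverse c * inverse (real (Suc N)) \<le> inverse c * inverse (real N)" using c by (intro mult_left_mono) auto
    also have "\<dots> < inverse c * (c * e / 2)" using N c by (intro mult_strict_left_mono) auto
    also have "\<dots> = e / 2" using c by simp
    finally have NN: "inverse c * inverse (real (Suc N)) < e / 2" .
    show "\<exists>M. \<forall>m\<ge>M. \<forall>n\<ge>M. dist (x m) (x n) < e"
    proof (intro exI allI impI)
      fix m n assume "Suc N \<le> m" "Suc N \<le> n"
      hence "dist (x m) (x (Suc N)) < e/2" "dist (x n) (x (Suc N)) < e/2"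
        using dsmall NN by (meson le_less_trans)+
      thus "dist (x m) (x n) < e" using dist_triangle2[of "x m" "x n" "x (Suc N)"] by linarith
    qed
  qed
  then obtain z where lim: "x \<longlonglongrightarrow> z" using Cauchy_convergent_iff convergent_def by blast
  have zS: "z \<in> S (x n)" for n
  proof (rule ccontr)
    assume "z \<notin> S (x n)"
    hence gt: "h z + c * dist z (x n) > h (x n)" by (simp add: S_def)
    define \<eta> where "\<eta> = (h z + c * dist z (x n) - h (x n)) / 2"
    have eta: "\<eta> > 0" using gt by (simp add: \<eta>_def)
    obtain e where e: "e > 0" "\<forall>w. dist w z < e \<longrightarrow> h z - \<eta> < h w" using lsc[of "h z - \<eta>" z] eta by auto
    have ev1: "eventually (\<lambda>m. dist (x m) z < e) sequentially"
      using lim e(1) by (simp add: tendsto_iff)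
    have "(\<lambda>m. dist (x m) (x n)) \<longlonglongrightarrow> dist z (x n)" by (intro tendsto_intros lim)
    hence ev2: "eventually (\<lambda>m. dist (x m) (x n) > dist z (x n) - \<eta> / c) sequentially"
      using eta c by (intro order_tendstoD(1)) auto
    have ev3: "eventually (\<lambda>m. m \<ge> n) sequentially" by (rule eventually_ge_at_top)
    obtain m where m: "dist (x m) z < e" "dist (x m) (x n) > dist z (x n) - \<eta> / c" "m \<ge> n"
      using eventually_happens'[OF _ eventually_conj[OF ev1 eventually_conj[OF ev2 ev3]]] by auto
    have "h (x m) > h z - \<eta>" using e m by auto
    moreover have "c * dist (x m) (x n) > c * (dist z (x n) - \<eta> / c)" using m(2) c by (intro mult_strict_left_mono) auto
    moreover have "c * (dist z (x n) - \<eta> / c) = c * dist z (x n) - \<eta>" using c by (simp add: right_diff_distrib)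
    moreover have "h (x m) + c * dist (x m) (x n) \<le> h (x n)" using mono[OF m(3)] by (simp add: S_def)
    moreover have "2 * \<eta> = h z + c * dist z (x n) - h (x n)" by (simp add: \<eta>_def)
    ultimately show False by linarith
  qed
  have part1: "h z + c * dist z x0 \<le> h x0" using zS[of 0] x0 by (simp add: S_def)
  have part2: "h z \<le> h w + c * dist w z" for w
  proof (rule ccontr)
    assume nt: "\<not> h z \<le> h w + c * dist w z"
    hence wS: "w \<in> S z" by (simp add: S_def)
    have "dist (x (Suc n)) w \<le> inverse c * inverse (real (Suc n))" for n
    proof -
      have "c * dist w (x (Suc n)) \<le> inverse (real (Suc n))" by (rule small[OF trans[OF wS zS]])
      hence "inverse c * (c * dist w (x (Suc n))) \<le> inverse c * inverse (real (Suc n))"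
        using c by (intro mult_left_mono) auto
      moreover have "inverse c * (c * dist w (x (Suc n))) = dist (x (Suc n)) w" using c by (simp add: dist_commute)
      ultimately show ?thesis by linarith
    qed
    hence ev: "eventually (\<lambda>n. norm (dist (x (Suc n)) w) \<le> inverse c * inverse (real (Suc n))) sequentially"
      by (simp add: always_eventually)
    have "(\<lambda>n. inverse c * inverse (real (Suc n))) \<longlonglongrightarrow> 0"
      by (rule tendsto_mult_right_zero[OF LIMSEQ_inverse_real_of_nat])
    from Lim_null_comparison[OF ev this] have "(\<lambda>n. x (Suc n)) \<longlonglongrightarrow> w"
      by (rule tendsto_dist_iff[THEN iffD2])
    moreover have "(\<lambda>n. x (Suc n)) \<longlonglongrightarrow> z" using lim by (rule LIMSEQ_Suc)
    ultimately have "w = z" by (rule LIMSEQ_unique)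
    thus False using nt by simp
  qed
  show ?thesis using part1 part2 by blast
qed



lemma sd_nonneg: "0 \<le> set_dist x S"
proof (cases "S = {}")
  case False
  hence "0 \<le> (INF y\<in>S. dist x y)" by (intro cINF_greatest) auto
  thus ?thesis using False by (simp add: set_dist_def)
qed (simp add: set_dist_def)

lemma sd_le: "y \<in> S \<Longrightarrow> set_dist x S \<le> ereal (dist x y)"
proof -
  assume y: "y \<in> S"
  have "(INF y\<in>S. dist x y) \<le> dist x y"
    using y by (intro cINF_lower) (auto intro!: bdd_belowI[of _ 0])
  thus ?thesis using y by (auto simp: set_dist_def)
qed

lemma sd_mem: "x \<in> S \<Longrightarrow> set_dist x S = 0"
  using sd_le[of x S x] sd_nonneg[of x S] by (simp add: zero_ereal_def)

lemma sd_lt: "set_dist x S < ereal a \<Longrightarrow> \<exists>y\<in>S. dist x y < a"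
proof -
  assume lt: "set_dist x S < ereal a"
  hence ne: "S \<noteq> {}" by (auto simp: set_dist_def)
  hence "Inf (dist x ` S) < a" using lt by (simp add: set_dist_def)
  from cInf_lessD[OF _ this] ne show ?thesis by blast
qed

lemma sd_tri: "set_dist x S \<le> ereal (dist x x') + set_dist x' S"
proof (cases "S = {}")
  case True thus ?thesis by (simp add: set_dist_def)
next
  case False
  have bdd: "bdd_below (dist u ` S)" for u by (auto intro!: bdd_belowI[of _ 0])
  have "(INF y\<in>S. dist x y) - dist x x' \<le> dist x' y" if "y \<in> S" for y
  proof -
    have "(INF y\<in>S. dist x y) \<le> dist x y" using that bdd by (intro cINF_lower) auto
    thus ?thesis using dist_triangle[of x y x'] by linarith
  qed
  hence "(INF y\<in>S. dist x y) - dist x x' \<le> (INF y\<in>S. dist x' y)"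
    using False by (intro cINF_greatest) auto
  thus ?thesis using False by (simp add: set_dist_def)
qed

lemma sdF_ge:
  fixes f :: "'a \<Rightarrow> ereal"
  assumes "f x = ereal b" "y < b"
  shows "ereal (b - y) \<le> set_dist y {t::real. f x \<le> ereal t}"
proof -
  have ne: "{t::real. f x \<le> ereal t} \<noteq> {}" using assms by auto
  have "b - y \<le> (INF t\<in>{t::real. f x \<le> ereal t}. dist y t)"
    using ne assms by (intro cINF_greatest) (auto simp: dist_real_def)
  thus ?thesis using ne by (simp add: set_dist_def)
qed

lemma sdF_inf:
  fixes f :: "'a \<Rightarrow> ereal"
  assumes "f x = \<infinity>"
  shows "set_dist y {t::real. f x \<le> ereal t} = \<infinity>"
  using assms by (simp add: set_dist_def)

lemma sdF_le:
  fixes f :: "'a \<Rightarrow> ereal"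
  assumes "f x = ereal b" "y < b"
  shows "set_dist y {t::real. f x \<le> ereal t} \<le> ereal (b - y)"
  using sd_le[of b "{t::real. f x \<le> ereal t}" y] assms by (simp add: dist_real_def)

lemma ediv_test: "d > 0 \<Longrightarrow> max 0 (ereal a - ereal b) / ereal d = ereal (max 0 (a - b) / d)"
  by (simp add: max_def)



lemma lsc_ev:
  fixes f :: "'a::metric_space \<Rightarrow> ereal"
  assumes "lsc_fun f" "ereal y < f z"
  shows "\<exists>d>0. \<forall>w. w \<noteq> z \<and> dist w z < d \<longrightarrow> ereal y < f w"
proof -
  have "f z \<le> Liminf (at z) f" using assms(1) by (simp add: lsc_fun_def)
  hence "eventually (\<lambda>w. ereal y < f w) (at z)" using assms(2) le_Liminf_iff by blast
  thus ?thesis by (simp add: eventually_at)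
qed

lemma arith1:
  fixes k d r0 yb a b y :: real
  assumes k: "k > 0" and d: "2*d < k*(r0-yb)" and a: "a \<le> yb" and b: "r0 \<le> b"
    and y: "r0 - yb < 2*(r0-y)" and yb: "yb < r0"
  shows "d + k * max 0 (a - y) \<le> k*(b-y)"
proof (cases "a \<le> y")
  case True
  have "k*(r0-yb) < k*(2*(r0-y))" using k y by (intro mult_strict_left_mono) auto
  moreover have "k*(r0-y) \<le> k*(b-y)" using k b by (intro mult_left_mono) auto
  moreover have "k * max 0 (a - y) = 0" using True by simp
  moreover have "k*(2*(r0-y)) = 2*(k*(r0-y))" by simp
  ultimately show ?thesis using True d by linarith
next
  case False
  have "k*(b-y) - k*(a-y) = k*(b-a)" by (simp add: algebra_simps)
  moreover have "k*(r0-yb) \<le> k*(b-a)" using k a b by (intro mult_left_mono) auto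
  moreover have "0 < k*(r0-yb)" using k yb by simp
  moreover have "max 0 (a - y) = a - y" using False by simp
  ultimately show ?thesis using False d by simp
qed

lemma ii_i:
  fixes f :: "'a::metric_space \<Rightarrow> ereal"
  assumes pf: "proper_fun f" and k: "k > 0"
  and ii: "\<forall>r\<in>{0<..<r0}. \<forall>x\<in>{x. 0 < f x \<and> f x < ereal r0}.
             set_dist x {y. f y \<le> ereal r} \<le> ereal k * max 0 (f x - ereal r)"
  shows "metrically_regular_on k (\<lambda>x. {y::real. f x \<le> ereal y})
            ({x. 0 < f x \<and> f x < ereal r0} \<times> {0<..<r0})"
proof -
  have invF: "inv_mv (\<lambda>x. {y::real. f x \<le> ereal y}) y = {x. f x \<le> ereal y}" for y
    by (simp add: inv_mv_def)
  have "metrically_regular_at k (\<lambda>x. {y::real. f x \<le> ereal y}) xb yb"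
    if h: "f xb \<le> ereal yb" "0 < f xb" "f xb < ereal r0" "0 < yb" "yb < r0" for xb yb
  proof -
    obtain a where a: "f xb = ereal a" using h by (cases "f xb") auto
    have ayb: "a \<le> yb" using h a by simp
    define \<epsilon> where "\<epsilon> = k*(r0-yb)/2"
    define \<delta> where "\<delta> = min yb (r0-yb)/2"
    have pos: "\<epsilon> > 0" "\<delta> > 0" using h k by (auto simp: \<epsilon>_def \<delta>_def)
    have "set_dist x {x. f x \<le> ereal y} \<le> ereal k * set_dist y {t. f x \<le> ereal t}"
      if x: "x \<in> ball xb \<epsilon>" and y: "y \<in> ball yb \<delta>" for x y
    proof -
      have dx: "dist x xb < \<epsilon>" using x by (simp add: dist_commute)
      have "\<bar>yb - y\<bar> < \<delta>" using y by (simp add: dist_real_def)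
      hence "y - yb < \<delta>" "yb - y < \<delta>" by (simp_all add: abs_less_iff)
      moreover have "2*\<delta> \<le> yb" "2*\<delta> \<le> r0-yb" by (simp_all add: \<delta>_def)
      ultimately have "0 < y \<and> y < r0 \<and> r0 - yb < 2*(r0-y)" using h(4,5) by (simp add: field_simps)
      hence y0: "0 < y" "y < r0" "r0 - yb < 2*(r0-y)" by auto
      show ?thesis
      proof (cases "f x")
        case PInf thus ?thesis using k by (simp add: set_dist_def)
      next
        case MInf thus ?thesis using pf by (simp add: proper_fun_def)
      next
        case (real b)
        show ?thesis
        proof (cases "b \<le> y")
          case True
          hence "set_dist x {x. f x \<le> ereal y} = 0" using real by (intro sd_mem) simp
          moreover have "ereal k * 0 \<le> ereal k * set_dist y {t. f x \<le> ereal t}"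
            using k by (intro ereal_mult_left_mono sd_nonneg) auto
          ultimately show ?thesis by simp
        next
          case False
          have "ereal k * ereal (b - y) \<le> ereal k * set_dist y {t. f x \<le> ereal t}"
            using k False real by (intro ereal_mult_left_mono sdF_ge) auto
          hence low: "ereal (k*(b-y)) \<le> ereal k * set_dist y {t. f x \<le> ereal t}" by simp
          have "set_dist x {x. f x \<le> ereal y} \<le> ereal (k*(b-y))"
          proof (cases "b < r0")
            case True
            have "x \<in> {x. 0 < f x \<and> f x < ereal r0}" using real True False y0 by simp
            hence "set_dist x {x. f x \<le> ereal y} \<le> ereal k * max 0 (f x - ereal y)"
              using ii y0 by auto
            also have "\<dots> = ereal (k*(b-y))" using real False by (simp add: max_def)
            finally show ?thesis .
          next
            case False
            have "xb \<in> {x. 0 < f x \<and> f x < ereal r0}" using h by simp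
            hence "set_dist xb {x. f x \<le> ereal y} \<le> ereal k * max 0 (f xb - ereal y)"
              using ii y0 by auto
            also have "\<dots> = ereal (k * max 0 (a - y))" using a by (cases "a \<le> y") (auto simp: max_def)
            finally have s1: "set_dist xb {x. f x \<le> ereal y} \<le> ereal (k * max 0 (a - y))" .
            have "set_dist x {x. f x \<le> ereal y} \<le> ereal (dist x xb) + set_dist xb {x. f x \<le> ereal y}"
              by (rule sd_tri)
            also have "\<dots> \<le> ereal (dist x xb) + ereal (k * max 0 (a - y))"
              using s1 by (rule add_left_mono)
            also have "\<dots> \<le> ereal (k*(b-y))"
              using arith1[of k "dist x xb" r0 yb a b y] k dx ayb False y0 h by (simp add: \<epsilon>_def field_simps)
            finally show ?thesis .
          qed
          thus ?thesis using low by (rule order_trans)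
        qed
      qed
    qed
    thus ?thesis unfolding metrically_regular_at_def invF using pos by blast
  qed
  thus ?thesis by (auto simp: metrically_regular_on_def graph_mv_def)
qed



lemma i_iii:
  fixes f :: "'a::metric_space \<Rightarrow> ereal"
  assumes pf: "proper_fun f" and k: "k > 0"
  and i: "metrically_regular_on k (\<lambda>x. {y::real. f x \<le> ereal y})
            ({x. 0 < f x \<and> f x < ereal r0} \<times> {0<..<r0})"
  shows "\<forall>x\<in>{x. 0 < f x \<and> f x < ereal r0}. strong_slope f x \<ge> ereal (1 / k)"
proof (intro ballI)
  fix x assume "x \<in> {x. 0 < f x \<and> f x < ereal r0}"
  then obtain a where a: "f x = ereal a" "0 < a" "a < r0" by (cases "f x") auto
  have "metrically_regular_at k (\<lambda>x. {y::real. f x \<le> ereal y}) x a"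
    using i a unfolding metrically_regular_on_def graph_mv_def by auto
  then obtain \<epsilon> \<delta> where ed: "\<epsilon> > 0" "\<delta> > 0" and reg: "\<forall>x'\<in>ball x \<epsilon>. \<forall>y\<in>ball a \<delta>.
      set_dist x' (inv_mv (\<lambda>x. {y::real. f x \<le> ereal y}) y) \<le> ereal k * set_dist y {t. f x' \<le> ereal t}"
    unfolding metrically_regular_at_def by blast
  have key: "set_dist x {w. f w \<le> ereal (a - t)} \<le> ereal (k*t)" if t: "0 < t" "t < \<delta>" for t
  proof -
    have "set_dist x {w. f w \<le> ereal (a-t)} \<le> ereal k * set_dist (a-t) {s. f x \<le> ereal s}"
      using reg ed t by (simp add: inv_mv_def dist_real_def)
    also have "\<dots> \<le> ereal k * ereal t" using sdF_le[of f x a "a-t"] a t k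
      by (intro ereal_mult_left_mono) auto
    finally show ?thesis by simp
  qed
  show "ereal (1/k) \<le> strong_slope f x"
  proof (rule ccontr)
    assume "\<not> ereal (1/k) \<le> strong_slope f x"
    hence lt: "strong_slope f x < ereal (1/k)" by simp
    obtain q where q: "strong_slope f x < ereal q" "q < 1/k" using ereal_dense2[OF lt] by auto
    define q0 where "q0 = max q (1/(2*k))"
    have "1/(2*k) < 1/k" using k by (simp add: field_simps)
    hence q02: "q0 < 1/k" using q by (simp add: q0_def)
    have "ereal q \<le> ereal q0" by (simp add: q0_def)
    hence q01: "strong_slope f x < ereal q0" using q(1) by (meson order_less_le_trans)
    have "0 < q0" using k by (simp add: q0_def less_max_iff_disj)
    note q0 = q01 q02 this
    have "Limsup (at x) (\<lambda>w. max 0 (f x - f w) / ereal (dist x w)) \<le> strong_slope f x"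
      by (simp add: strong_slope_def)
    hence "eventually (\<lambda>w. max 0 (f x - f w) / ereal (dist x w) < ereal q0) (at x)"
      using q0(1) unfolding Limsup_le_iff by blast
    then obtain d where d: "d > 0" and dd: "\<forall>w. w \<noteq> x \<and> dist w x < d \<longrightarrow>
        max 0 (f x - f w) / ereal (dist x w) < ereal q0"
      by (auto simp: eventually_at)
    define t where "t = min \<delta> (q0*d) / 2"
    have t: "0 < t" "t < \<delta>" "2*t \<le> q0*d" using d ed q0 by (auto simp: t_def)
    have kq: "k*q0 < 1" using q0 k by (simp add: field_simps)
    have "k*t*q0 < t" using kq t by (simp add: mult.commute mult.left_commute)
    hence "k*t < t/q0" using q0 by (simp add: field_simps)
    hence "ereal (k*t) < ereal (t/q0)" by simp
    hence "set_dist x {w. f w \<le> ereal (a - t)} < ereal (t/q0)" using key[OF t(1,2)] by (meson order_le_less_trans)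
    then obtain w where w: "f w \<le> ereal (a - t)" "dist x w < t/q0" using sd_lt by blast
    have "t/q0 \<le> d/2" using t q0 by (simp add: field_simps)
    hence "t/q0 < d" using d by linarith
    hence wd: "dist w x < d" using w by (simp add: dist_commute)
    obtain b where b: "f w = ereal b" using w pf by (cases "f w") (auto simp: proper_fun_def)
    have bt: "b \<le> a - t" using w b by simp
    hence wx: "w \<noteq> x" using a b t by auto
    hence dpos: "dist x w > 0" by simp
    have val: "max 0 (f x - f w) / ereal (dist x w) = ereal (max 0 (a - b) / dist x w)"
      using a b ediv_test[OF dpos] by simp
    have "q0 * dist x w < t" using w q0 by (simp add: field_simps)
    hence "q0 < t / dist x w" using dpos by (simp add: field_simps)
    also have "t / dist x w \<le> max 0 (a - b) / dist x w" using bt dpos by (intro divide_right_mono) auto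
    finally have "ereal q0 < max 0 (f x - f w) / ereal (dist x w)" using val by simp
    thus False using dd wx wd by auto
  qed
qed



lemma iii_ii:
  fixes f :: "'a::complete_space \<Rightarrow> ereal"
  assumes pf: "proper_fun f" and lsc: "lsc_fun f" and k: "k > 0"
  and iii: "\<forall>x\<in>{x. 0 < f x \<and> f x < ereal r0}. strong_slope f x \<ge> ereal (1 / k)"
  shows "\<forall>r\<in>{0<..<r0}. \<forall>x\<in>{x. 0 < f x \<and> f x < ereal r0}.
             set_dist x {y. f y \<le> ereal r} \<le> ereal k * max 0 (f x - ereal r)"
proof (intro ballI)
  fix r x assume r: "r \<in> {0<..<r0}" and "x \<in> {x. 0 < f x \<and> f x < ereal r0}"
  then obtain a where a: "f x = ereal a" "0 < a" "a < r0" by (cases "f x") auto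
  show "set_dist x {y. f y \<le> ereal r} \<le> ereal k * max 0 (f x - ereal r)"
  proof (cases "a \<le> r")
    case True
    hence "set_dist x {y. f y \<le> ereal r} = 0" using a by (intro sd_mem) simp
    moreover have "ereal k * 0 \<le> ereal k * max 0 (f x - ereal r)"
      using k by (intro ereal_mult_left_mono) auto
    ultimately show ?thesis by simp
  next
    case False
    have rhs: "ereal k * max 0 (f x - ereal r) = ereal (k*(a-r))" using a False by (simp add: max_def)
    show ?thesis
    proof (rule ccontr)
      assume "\<not> ?thesis"
      hence lt: "ereal (k*(a-r)) < set_dist x {y. f y \<le> ereal r}" using rhs by simp
      obtain lam where lam: "ereal (k*(a-r)) < ereal lam" "ereal lam < set_dist x {y. f y \<le> ereal r}"
        using ereal_dense2[OF lt] by auto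
      have lam1: "k*(a-r) < lam" using lam by simp
      have lpos: "lam > 0" using lam1 k False by (smt (verit) mult_pos_pos)
      define c where "c = (a-r)/lam"
      have cpos: "c > 0" using lpos False by (simp add: c_def)
      have clam: "c * lam = a - r" using lpos by (simp add: c_def)
      have ck: "c * k < 1" using lam1 lpos by (simp add: c_def field_simps)
      hence ck': "c < 1/k" using k by (simp add: field_simps)
      define h where "h w = real_of_ereal (max (ereal r) (min (f w) (ereal a)))" for w
      have hE: "ereal (h w) = max (ereal r) (min (f w) (ereal a))" for w
      proof -
        define v where "v = max (ereal r) (min (f w) (ereal a))"
        have v1: "ereal r \<le> v" by (simp add: v_def)
        have v2: "v \<le> ereal a" using False by (simp add: v_def)
        have "v \<noteq> \<infinity>" using v2 by auto
        moreover have "v \<noteq> -\<infinity>" using v1 by auto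
        ultimately have "\<bar>v\<bar> \<noteq> \<infinity>" by auto
        thus ?thesis by (simp add: h_def ereal_real v_def[symmetric])
      qed
      have hr: "r \<le> h w" for w using hE[of w] by (metis ereal_less_eq(3) max.cobounded1)
      have hx: "h x = a" using hE[of x] a False by simp
      have hlsc: "\<exists>e>0. \<forall>w. dist w z < e \<longrightarrow> y < h w" if yz: "y < h z" for z y
      proof (cases "y < r")
        case True thus ?thesis using hr by (intro exI[of _ 1]) (auto intro: less_le_trans)
      next
        case False
        have "ereal y < ereal (h z)" using yz by simp
        hence "ereal y < max (ereal r) (min (f z) (ereal a))" using hE[of z] by simp
        hence "ereal y < min (f z) (ereal a)" using False by (auto simp: less_max_iff_disj)
        hence fz: "ereal y < f z" and ya: "y < a" by auto
        obtain d where d: "d > 0" "\<forall>w. w \<noteq> z \<and> dist w z < d \<longrightarrow> ereal y < f w"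
          using lsc_ev[OF lsc fz] by blast
        have "y < h w" if "dist w z < d" for w
        proof (cases "w = z")
          case True thus ?thesis using yz by simp
        next
          case False
          hence "ereal y < f w" using d that by auto
          hence "ereal y < min (f w) (ereal a)" using ya by simp
          hence "ereal y < max (ereal r) (min (f w) (ereal a))" by (simp add: less_max_iff_disj)
          hence "ereal y < ereal (h w)" using hE[of w] by simp
          thus ?thesis by simp
        qed
        thus ?thesis using d(1) by blast
      qed
      obtain z where z1: "h z + c * dist z x \<le> h x" and z2: "\<forall>w. h z \<le> h w + c * dist w z"
        using ekeland[of h r c x, OF hlsc hr cpos] by blast
      have "c * dist z x \<le> c * lam" using z1 hx hr[of z] clam by simp
      hence dzx: "dist z x \<le> lam" using cpos by simp
      have fzr: "f z > ereal r"
      proof (rule ccontr)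
        assume "\<not> f z > ereal r"
        hence "z \<in> {y. f y \<le> ereal r}" by simp
        hence "set_dist x {y. f y \<le> ereal r} \<le> ereal (dist x z)" by (rule sd_le)
        also have "\<dots> \<le> ereal lam" using dzx by (simp add: dist_commute)
        finally show False using lam(2) by simp
      qed
      have fza: "f z \<le> ereal a"
      proof (cases "z = x")
        case True thus ?thesis using a by simp
      next
        case False
        hence "c * dist z x > 0" using cpos by simp
        hence "h z < a" using z1 hx by simp
        hence "ereal (h z) < ereal a" by simp
        hence "max (ereal r) (min (f z) (ereal a)) < ereal a" using hE[of z] by simp
        thus ?thesis by (auto simp: min_def split: if_splits)
      qed
      have "min (f z) (ereal a) = f z" using fza by (simp add: min_absorb1)
      moreover have "max (ereal r) (f z) = f z" using fzr by (simp add: max_absorb2)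
      ultimately have fzh: "f z = ereal (h z)" using hE[of z] by simp
      have "(0::ereal) < ereal r" using r by simp
      hence "0 < f z" using fzr by (meson order_less_trans)
      moreover have "ereal a < ereal r0" using a by simp
      hence "f z < ereal r0" using fza by (meson order_le_less_trans)
      ultimately have zD: "z \<in> {x. 0 < f x \<and> f x < ereal r0}" by simp
      obtain d where d: "d > 0" "\<forall>w. w \<noteq> z \<and> dist w z < d \<longrightarrow> ereal r < f w"
        using lsc_ev[OF lsc fzr] by blast
      have "eventually (\<lambda>w. max 0 (f z - f w) / ereal (dist z w) \<le> ereal c) (at z)"
        unfolding eventually_at
      proof (intro exI[of _ d] conjI ballI impI)
        fix w assume w: "w \<in> UNIV" "w \<noteq> z \<and> dist w z < d"
        hence frw: "ereal r < f w" using d by auto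
        have "max (ereal r) (min (f w) (ereal a)) \<le> f w" using frw by simp
        hence "ereal (h w) \<le> f w" using hE[of w] by simp
        hence "f z - f w \<le> ereal (h z) - ereal (h w)" using fzh by (intro ereal_minus_mono) auto
        also have "\<dots> \<le> ereal (c * dist z w)" using z2 by (simp add: dist_commute algebra_simps)
        finally have "max 0 (f z - f w) \<le> ereal (c * dist z w)" using cpos by simp
        moreover have "dist z w > 0" using w by auto
        ultimately show "max 0 (f z - f w) / ereal (dist z w) \<le> ereal c"
          by (intro ereal_divide_le_posI) (auto simp: mult.commute)
      qed (use d in auto)
      hence "strong_slope f z \<le> ereal c" unfolding strong_slope_def by (rule Limsup_bounded)
      moreover have "strong_slope f z \<ge> ereal (1/k)" using iii zD by blast
      ultimately have "ereal (1/k) \<le> ereal c" by (rule order_trans[rotated])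
      thus False using ck' by simp
    qed
  qed
qed

theorem theorem2p2:
  fixes f :: "'a::complete_space \<Rightarrow> ereal" and r0 k :: real
  assumes "proper_fun f" and "lsc_fun f" and "r0 > 0" and "k > 0"
  shows "(metrically_regular_on k (\<lambda>x. {y::real. f x \<le> ereal y})
            ({x. 0 < f x \<and> f x < ereal r0} \<times> {0<..<r0}) \<longleftrightarrow>
          (\<forall>r\<in>{0<..<r0}. \<forall>x\<in>{x. 0 < f x \<and> f x < ereal r0}.
             set_dist x {y. f y \<le> ereal r} \<le> ereal k * max 0 (f x - ereal r))) \<and>
         ((\<forall>r\<in>{0<..<r0}. \<forall>x\<in>{x. 0 < f x \<and> f x < ereal r0}.
             set_dist x {y. f y \<le> ereal r} \<le> ereal k * max 0 (f x - ereal r)) \<longleftrightarrow>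
          (\<forall>x\<in>{x. 0 < f x \<and> f x < ereal r0}. strong_slope f x \<ge> ereal (1 / k)))"
proof -
  have A: "metrically_regular_on k (\<lambda>x. {y::real. f x \<le> ereal y}) ({x. 0 < f x \<and> f x < ereal r0} \<times> {0<..<r0})"
    if "\<forall>r\<in>{0<..<r0}. \<forall>x\<in>{x. 0 < f x \<and> f x < ereal r0}.
             set_dist x {y. f y \<le> ereal r} \<le> ereal k * max 0 (f x - ereal r)"
    using ii_i[OF assms(1) assms(4) that] .
  have B: "\<forall>x\<in>{x. 0 < f x \<and> f x < ereal r0}. strong_slope f x \<ge> ereal (1 / k)"
    if "metrically_regular_on k (\<lambda>x. {y::real. f x \<le> ereal y}) ({x. 0 < f x \<and> f x < ereal r0} \<times> {0<..<r0})"
    using i_iii[OF assms(1) assms(4) that] .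
  have C: "\<forall>r\<in>{0<..<r0}. \<forall>x\<in>{x. 0 < f x \<and> f x < ereal r0}.
             set_dist x {y. f y \<le> ereal r} \<le> ereal k * max 0 (f x - ereal r)"
    if "\<forall>x\<in>{x. 0 < f x \<and> f x < ereal r0}. strong_slope f x \<ge> ereal (1 / k)"
    using iii_ii[OF assms(1) assms(2) assms(4) that] .
  show ?thesis using A B C by blast
qed

end
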